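(* Let $(\mathcal{G},\mu\circ\lambda)$ be a measured groupoid and let $\pi$ be a probability measure equivalent to $\mu\circ\lambda$ (with $t_*\pi=s_*\pi=\mu$). Let $(\check{\mathcal{B}},\check\theta_\mu)$ be the Poisson boundary of the Markov operator generated by the reflected measure $\check\pi$ with initial distribution $\mu$. Then $\check\theta_\mu$ is $\pi$-stationary: $\pi*\check\theta_\mu=\check\theta_\mu$, where $\pi*\check\theta_\mu:=\int_X\int_{\mathcal{G}}(g^{-1})_*\check\theta^x\,d\pi^x(g)\,d\mu(x)$.
   Context: $\mathcal{G}$ is a Borel groupoid with standard Borel unit space $X$, source $s$, target $t$, Borel Haar system $\lambda$ and quasi-invariant probability $\mu$ on $X$. $\check\pi$ is the image of $\pi$ under inversion; $\pi^x$ is the disintegration of $\pi$ over $t$ (supported on $t^{-1}(x)$). Disintegrate $\check\pi$ over $t$ as $\check\pi^x$ and set $\check\pi^g=g_*\check\pi^{s(g)}$. On $\Omega_{\mathcal{G}}=\{(g_0,g_1,\dots):t(g_i)=t(g_j)\}$, $\check{\mathbb{P}}_g$ is the Markov measure starting at $\delta_g$ with transitions $\check\pi^{g_{n-1}}$ and $\check{\mathbb{P}}_m=\int\check{\mathbb{P}}_g dm(g)$. The Poisson boundary $\check{\mathcal{B}}$ is the space of ergodic components of stable equivalence of the shift $T(g_0,g_1,\dots)=(g_1,\dots)$, with map $\check{\mathbf{bnd}}$, $\check\theta_\mu=\check{\mathbf{bnd}}_*\check{\mathbb{P}}_\mu$, target induced by $t(g_0)$, $\mathcal{G}$-action induced by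 diagonal left multiplication; $\check\theta^x=\check{\mathbf{bnd}}_*\check{\mathbb{P}}_x$ is the disintegration of $\check\theta_\mu$ over $X$. For $g\in t^{-1}(x)$, $g^{-1}$ maps the fiber $\check{\mathcal{B}}^x$ to $\check{\mathcal{B}}^{s(g)}$. *)

theory Defs
  imports "HOL-Probability.Probability"
begin

definition standard_borel :: "'a measure \<Rightarrow> bool" where
  "standard_borel M \<longleftrightarrow>
     (\<exists>(f::'a \<Rightarrow> real) g B. B \<in> sets borel \<and>
        f \<in> measurable M (restrict_space borel B) \<and>
        g \<in> measurable (restrict_space borel B) M \<and>
        (\<forall>x\<in>space M. g (f x) = x) \<and> (\<forall>y\<in>B. f (g y) = y))"

definition borel_groupoid ::
  "'g measure \<Rightarrow> 'x measure \<Rightarrow> ('g \<Rightarrow> 'x) \<Rightarrow> ('g \<Rightarrow> 'x) \<Rightarrow> ('x \<Rightarrow> 'g)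
    \<Rightarrow> ('g \<Rightarrow> 'g \<Rightarrow> 'g) \<Rightarrow> ('g \<Rightarrow> 'g) \<Rightarrow> bool" where
  "borel_groupoid G X s t u m i \<longleftrightarrow>
     s \<in> measurable G X \<and> t \<in> measurable G X \<and> u \<in> measurable X G \<and>
     i \<in> measurable G G \<and>
     (\<lambda>(g, h). m g h) \<in> measurable (restrict_space (G \<Otimes>\<^sub>M G) {(g, h). s g = t h}) G \<and>
     (\<forall>x\<in>space X. s (u x) = x \<and> t (u x) = x) \<and>
     (\<forall>g\<in>space G. \<forall>h\<in>space G. s g = t h \<longrightarrow> s (m g h) = s h \<and> t (m g h) = t g) \<and>
     (\<forall>g\<in>space G. \<forall>h\<in>space G. \<forall>k\<in>space G. s g = t h \<and> s h = t k \<longrightarrow>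
        m (m g h) k = m g (m h k)) \<and>
     (\<forall>g\<in>space G. m (u (t g)) g = g \<and> m g (u (s g)) = g) \<and>
     (\<forall>g\<in>space G. s (i g) = t g \<and> t (i g) = s g \<and> m g (i g) = u (t g) \<and> m (i g) g = u (s g))"

text \<open>The measure  \<open>\<integral> K x d\<mu>(x)\<close> on G (e.g. \<open>\<mu>\<circ>\<lambda>\<close>).\<close>
definition integrate_family :: "'g measure \<Rightarrow> 'x measure \<Rightarrow> ('x \<Rightarrow> 'g measure) \<Rightarrow> 'g measure" where
  "integrate_family G mu K = measure_of (space G) (sets G) (\<lambda>E. \<integral>\<^sup>+ x. emeasure (K x) E \<partial>mu)"

definition haar_system ::
  "'g measure \<Rightarrow> 'x measure \<Rightarrow> ('g \<Rightarrow> 'x) \<Rightarrow> ('g \<Rightarrow> 'x) \<Rightarrow> ('g \<Rightarrow> 'g \<Rightarrow> 'g)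
    \<Rightarrow> ('x \<Rightarrow> 'g measure) \<Rightarrow> bool" where
  "haar_system G X s t m lam \<longleftrightarrow>
     (\<forall>x\<in>space X. sets (lam x) = sets G \<and> sigma_finite_measure (lam x) \<and>
        emeasure (lam x) {g\<in>space G. t g \<noteq> x} = 0) \<and>
     (\<forall>E\<in>sets G. (\<lambda>x. emeasure (lam x) E) \<in> borel_measurable X) \<and>
     (\<forall>g\<in>space G. \<forall>E\<in>sets G.
        emeasure (lam (t g)) E = emeasure (lam (s g)) {h\<in>space G. t h = s g \<and> m g h \<in> E})"

definition equiv_measures :: "'a measure \<Rightarrow> 'a measure \<Rightarrow> bool" where
  "equiv_measures M N \<longleftrightarrow> sets M = sets N \<and>
     (\<forall>A\<in>sets M. emeasure M A = 0 \<longleftrightarrow> emeasure N A = 0)"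

text \<open>Measured groupoid \<open>(\<G>, \<mu>\<circ>\<lambda>)\<close>: Borel groupoid with standard Borel unit space,
  Borel Haar system and quasi-invariant probability measure on the unit space.\<close>
definition measured_groupoid ::
  "'g measure \<Rightarrow> 'x measure \<Rightarrow> ('g \<Rightarrow> 'x) \<Rightarrow> ('g \<Rightarrow> 'x) \<Rightarrow> ('x \<Rightarrow> 'g)
    \<Rightarrow> ('g \<Rightarrow> 'g \<Rightarrow> 'g) \<Rightarrow> ('g \<Rightarrow> 'g) \<Rightarrow> ('x \<Rightarrow> 'g measure) \<Rightarrow> 'x measure \<Rightarrow> bool" where
  "measured_groupoid G X s t u m i lam mu \<longleftrightarrow>
     borel_groupoid G X s t u m i \<and> standard_borel X \<and> haar_system G X s t m lam \<and>
     prob_space mu \<and> sets mu = sets X \<and>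
     equiv_measures (integrate_family G mu lam) (distr (integrate_family G mu lam) G i)"

definition disintegration ::
  "'a measure \<Rightarrow> 'x measure \<Rightarrow> 'x measure \<Rightarrow> ('a \<Rightarrow> 'x) \<Rightarrow> ('x \<Rightarrow> 'a measure) \<Rightarrow> bool" where
  "disintegration M N X f K \<longleftrightarrow>
     (\<forall>x\<in>space X. prob_space (K x) \<and> sets (K x) = sets M) \<and>
     (AE x in N. emeasure (K x) {w\<in>space M. f w \<noteq> x} = 0) \<and>
     (\<forall>E\<in>sets M. (\<lambda>x. emeasure (K x) E) \<in> borel_measurable X) \<and>
     (\<forall>E\<in>sets M. emeasure M E = (\<integral>\<^sup>+ x. emeasure (K x) E \<partial>N))"

text \<open>Transition \<open>\<check>\<pi>^g = g_* \<check>\<pi>^{s(g)}\<close>.\<close>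
definition reflected_transition ::
  "'g measure \<Rightarrow> ('g \<Rightarrow> 'x) \<Rightarrow> ('g \<Rightarrow> 'x) \<Rightarrow> ('g \<Rightarrow> 'g \<Rightarrow> 'g) \<Rightarrow> ('x \<Rightarrow> 'g measure)
    \<Rightarrow> 'g \<Rightarrow> 'g measure" where
  "reflected_transition G s t m K g = measure_of (space G) (sets G)
     (\<lambda>E. emeasure (K (s g)) {h\<in>space G. t h = s g \<and> m g h \<in> E})"

text \<open>Probability that steps 1..n of the chain from g lie in the given sets.\<close>
fun cyl_prob :: "('a \<Rightarrow> 'a measure) \<Rightarrow> 'a set list \<Rightarrow> 'a \<Rightarrow> ennreal" where
  "cyl_prob K [] g = 1"
| "cyl_prob K (A # As) g = (\<integral>\<^sup>+ h. indicator A h * cyl_prob K As h \<partial>(K g))"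

definition markov_measure ::
  "'a measure \<Rightarrow> ('a \<Rightarrow> 'a measure) \<Rightarrow> 'a \<Rightarrow> 'a stream measure \<Rightarrow> bool" where
  "markov_measure G K g P \<longleftrightarrow> prob_space P \<and> sets P = sets (stream_space G) \<and>
     (\<forall>A As. A \<in> sets G \<longrightarrow> set As \<subseteq> sets G \<longrightarrow>
        emeasure P {w\<in>space (stream_space G). shd w \<in> A \<and> (\<forall>k<length As. stl w !! k \<in> As ! k)}
          = indicator A g * cyl_prob K As g)"

definition path_space :: "'g measure \<Rightarrow> ('g \<Rightarrow> 'x) \<Rightarrow> 'g stream set" where
  "path_space G t = {w\<in>space (stream_space G). \<forall>k l. t (w !! k) = t (w !! l)}"

definition stably_equiv :: "'a stream \<Rightarrow> 'a stream \<Rightarrow> bool" where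
  "stably_equiv w w' \<longleftrightarrow> (\<exists>n k. sdrop n w = sdrop k w')"

text \<open>Measurable sets of paths saturated for stable equivalence: the sigma-algebra that
  \<open>\<check>bnd\<close> pulls back from the Poisson boundary.\<close>
definition stable_invariant :: "'g measure \<Rightarrow> ('g \<Rightarrow> 'x) \<Rightarrow> 'g stream set \<Rightarrow> bool" where
  "stable_invariant G t A \<longleftrightarrow> A \<in> sets (stream_space G) \<and> A \<subseteq> path_space G t \<and>
     (\<forall>w\<in>path_space G t. \<forall>w'\<in>path_space G t. stably_equiv w w' \<longrightarrow> (w \<in> A \<longleftrightarrow> w' \<in> A))"

end

theory Submission
  imports Defs
begin

lemma standard_borel_singleton:
  assumes "standard_borel X" "x \<in> space X"
  shows "{x} \<in> sets X"
proof -
  obtain f :: "_ \<Rightarrow> real" and g B where B: "B \<in> sets borel"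
    and f: "f \<in> measurable X (restrict_space borel B)"
    and g: "g \<in> measurable (restrict_space borel B) X"
    and gf: "\<forall>x\<in>space X. g (f x) = x"
    using assms(1) unfolding standard_borel_def by blast
  have fx: "f x \<in> B" using measurable_space[OF f assms(2)] by (simp add: space_restrict_space)
  have "{f x} \<in> sets (restrict_space borel B)"
    using fx by (auto simp: sets_restrict_space image_iff intro!: bexI[of _ "{f x}"])
  then have "f -` {f x} \<inter> space X \<in> sets X" by (rule measurable_sets[OF f])
  moreover have "f -` {f x} \<inter> space X = {x}"
    using gf assms(2) by (auto, metis)
  ultimately show ?thesis by simp
qed

lemma standard_borel_diag:
  assumes "standard_borel X" and a: "a \<in> measurable M X" and b: "b \<in> measurable M X"
  shows "{p\<in>space M. a p = b p} \<in> sets M"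
proof -
  obtain f :: "_ \<Rightarrow> real" and g B where B: "B \<in> sets borel"
    and f: "f \<in> measurable X (restrict_space borel B)"
    and gf: "\<forall>x\<in>space X. g (f x) = x"
    using assms(1) unfolding standard_borel_def by blast
  have f': "f \<in> borel_measurable X" using f by (simp add: measurable_restrict_space2_iff)
  have fa: "(\<lambda>p. f (a p)) \<in> borel_measurable M" using f' a by (rule measurable_compose[rotated])
  have fb: "(\<lambda>p. f (b p)) \<in> borel_measurable M" using f' b by (rule measurable_compose[rotated])
  have "{p\<in>space M. f (a p) = f (b p)} \<in> sets M" using fa fb by measurable
  moreover have "{p\<in>space M. f (a p) = f (b p)} = {p\<in>space M. a p = b p}"
    using gf measurable_space[OF a] measurable_space[OF b] by (auto, metis)
  ultimately show ?thesis by simp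
qed


locale mk =
  fixes G :: "'g measure" and X :: "'x measure" and s t :: "'g \<Rightarrow> 'x" and u :: "'x \<Rightarrow> 'g"
    and m :: "'g \<Rightarrow> 'g \<Rightarrow> 'g" and i :: "'g \<Rightarrow> 'g"
    and piCK :: "'x \<Rightarrow> 'g measure" and P :: "'g \<Rightarrow> 'g stream measure"
  assumes bg: "borel_groupoid G X s t u m i" and sb: "standard_borel X"
    and piCK_prob: "\<And>x. x \<in> space X \<Longrightarrow> prob_space (piCK x)"
    and piCK_sets: "\<And>x. x \<in> space X \<Longrightarrow> sets (piCK x) = sets G"
    and piCK_meas: "\<And>E. E \<in> sets G \<Longrightarrow> (\<lambda>x. emeasure (piCK x) E) \<in> borel_measurable X"
    and markov: "\<And>g. g \<in> space G \<Longrightarrow> markov_measure G (reflected_transition G s t m piCK) g (P g)"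
begin

abbreviation "K \<equiv> reflected_transition G s t m piCK"
abbreviation "S \<equiv> stream_space G"

definition "Fib y = {h\<in>space G. t h = y}"
definition "pre g E = {h\<in>space G. t h = s g \<and> m g h \<in> E}"

lemma s_meas: "s \<in> measurable G X" and t_meas: "t \<in> measurable G X" and u_meas: "u \<in> measurable X G"
  and i_meas: "i \<in> measurable G G"
  and mm: "(\<lambda>(g, h). m g h) \<in> measurable (restrict_space (G \<Otimes>\<^sub>M G) {(g, h). s g = t h}) G"
  and su: "\<And>x. x\<in>space X \<Longrightarrow> s (u x) = x" and tu: "\<And>x. x\<in>space X \<Longrightarrow> t (u x) = x"
  and st_m: "\<And>g h. g\<in>space G \<Longrightarrow> h\<in>space G \<Longrightarrow> s g = t h \<Longrightarrow> s (m g h) = s h \<and> t (m g h) = t g"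
  and assoc: "\<And>g h k. g\<in>space G \<Longrightarrow> h\<in>space G \<Longrightarrow> k\<in>space G \<Longrightarrow> s g = t h \<Longrightarrow> s h = t k \<Longrightarrow>
        m (m g h) k = m g (m h k)"
  and unit_l: "\<And>g. g\<in>space G \<Longrightarrow> m (u (t g)) g = g" and unit_r: "\<And>g. g\<in>space G \<Longrightarrow> m g (u (s g)) = g"
  and inv: "\<And>g. g\<in>space G \<Longrightarrow> s (i g) = t g \<and> t (i g) = s g \<and> m g (i g) = u (t g) \<and> m (i g) g = u (s g)"
  using bg unfolding borel_groupoid_def by blast+

lemma s_space: "g \<in> space G \<Longrightarrow> s g \<in> space X" using measurable_space[OF s_meas] by blast
lemma t_space: "g \<in> space G \<Longrightarrow> t g \<in> space X" using measurable_space[OF t_meas] by blast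
lemma u_space: "x \<in> space X \<Longrightarrow> u x \<in> space G" using measurable_space[OF u_meas] by blast
lemma i_space: "g \<in> space G \<Longrightarrow> i g \<in> space G" using measurable_space[OF i_meas] by blast

lemma mult_space:
  assumes "g \<in> space G" "h \<in> space G" "s g = t h" shows "m g h \<in> space G"
proof -
  have "(g, h) \<in> space (restrict_space (G \<Otimes>\<^sub>M G) {(g, h). s g = t h})"
    using assms by (simp add: space_restrict_space space_pair_measure)
  from measurable_space[OF mm this] show ?thesis by simp
qed

lemma Fib_sets: "y \<in> space X \<Longrightarrow> Fib y \<in> sets G"
proof -
  assume y: "y \<in> space X"
  have "t -` {y} \<inter> space G \<in> sets G"
    by (rule measurable_sets[OF t_meas standard_borel_singleton[OF sb y]])
  moreover have "t -` {y} \<inter> space G = Fib y" by (auto simp: Fib_def)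
  ultimately show ?thesis by simp
qed

lemma Fib_sets': "g \<in> space G \<Longrightarrow> {h. t h = s g} \<inter> space G \<in> sets G"
  using Fib_sets[OF s_space] unfolding Fib_def by (simp add: Int_commute Collect_conj_eq)

lemma mg_meas:
  assumes g: "g \<in> space G"
  shows "m g \<in> measurable (restrict_space G {h. t h = s g}) G"
proof -
  have "Pair g \<in> measurable (restrict_space G {h. t h = s g}) (restrict_space (G \<Otimes>\<^sub>M G) {(g, h). s g = t h})"
    by (rule measurable_restrict_space3[OF measurable_Pair1'[OF g]]) auto
  from measurable_comp[OF this mm] show ?thesis by (simp add: comp_def)
qed

lemma diagG: "{p\<in>space (G \<Otimes>\<^sub>M G). s (fst p) = t (snd p)} \<in> sets (G \<Otimes>\<^sub>M G)"
  by (rule standard_borel_diag[OF sb]) (auto intro: measurable_compose[OF measurable_fst s_meas]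
       measurable_compose[OF measurable_snd t_meas])

lemma Dset:
  assumes E: "E \<in> sets G"
  shows "{p\<in>space (G \<Otimes>\<^sub>M G). s (fst p) = t (snd p) \<and> m (fst p) (snd p) \<in> E} \<in> sets (G \<Otimes>\<^sub>M G)"
proof -
  let ?R = "restrict_space (G \<Otimes>\<^sub>M G) {(g, h). s g = t h}"
  have D: "{(g, h). s g = t h} \<inter> space (G \<Otimes>\<^sub>M G) \<in> sets (G \<Otimes>\<^sub>M G)"
    using diagG by (simp add: Int_commute case_prod_beta Collect_conj_eq[symmetric] conj_commute)
  have "(\<lambda>(g, h). m g h) -` E \<inter> space ?R \<in> sets ?R" by (rule measurable_sets[OF mm E])
  then have "(\<lambda>(g, h). m g h) -` E \<inter> space ?R \<in> sets (G \<Otimes>\<^sub>M G)"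
    using D by (simp add: sets_restrict_space_iff)
  moreover have "(\<lambda>(g, h). m g h) -` E \<inter> space ?R =
     {p\<in>space (G \<Otimes>\<^sub>M G). s (fst p) = t (snd p) \<and> m (fst p) (snd p) \<in> E}"
    by (auto simp: space_restrict_space)
  ultimately show ?thesis by simp
qed

lemma K_eq:
  assumes g: "g \<in> space G"
  shows "K g = distr (restrict_space (piCK (s g)) {h. t h = s g}) G (m g)"
proof -
  let ?R = "restrict_space (piCK (s g)) {h. t h = s g}"
  let ?D = "distr ?R G (m g)"
  have sg: "s g \<in> space X" using s_space[OF g] .
  have sp: "space (piCK (s g)) = space G" using piCK_sets[OF sg] by (rule sets_eq_imp_space_eq)
  have mR: "m g \<in> measurable ?R G"
    using mg_meas[OF g] by (simp add: measurable_cong_sets[OF sets_restrict_space_cong[OF piCK_sets[OF sg]] refl])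
  have Om: "{h. t h = s g} \<inter> space (piCK (s g)) \<in> sets (piCK (s g))"
    using Fib_sets'[OF g] by (simp add: sp piCK_sets[OF sg])
  have "?D = measure_of (space ?D) (sets ?D) (emeasure ?D)" by (rule measure_of_of_measure[symmetric])
  also have "\<dots> = measure_of (space G) (sets G) (emeasure ?D)" by simp
  also have "\<dots> = measure_of (space G) (sets G)
     (\<lambda>E. emeasure (piCK (s g)) {h\<in>space G. t h = s g \<and> m g h \<in> E})"
  proof (rule measure_of_eq)
    show "sets G \<subseteq> Pow (space G)" by (rule sets.space_closed)
    fix E assume "E \<in> sigma_sets (space G) (sets G)"
    then have E: "E \<in> sets G" by (simp add: sets.sigma_sets_eq)
    have "emeasure ?D E = emeasure ?R (m g -` E \<inter> space ?R)" by (rule emeasure_distr[OF mR E])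
    also have "\<dots> = emeasure (piCK (s g)) (m g -` E \<inter> space ?R)"
      by (rule emeasure_restrict_space[OF Om]) (auto simp: space_restrict_space)
    also have "m g -` E \<inter> space ?R = {h\<in>space G. t h = s g \<and> m g h \<in> E}"
      by (auto simp: space_restrict_space sp)
    finally show "emeasure ?D E = emeasure (piCK (s g)) {h\<in>space G. t h = s g \<and> m g h \<in> E}" .
  qed
  finally show ?thesis unfolding reflected_transition_def by simp
qed

lemma K_sets: "g \<in> space G \<Longrightarrow> sets (K g) = sets G"
  by (simp add: K_eq)

lemma K_space: "g \<in> space G \<Longrightarrow> space (K g) = space G"
  using K_sets by (rule sets_eq_imp_space_eq)

lemma piCK_space: "x \<in> space X \<Longrightarrow> space (piCK x) = space G"
  using piCK_sets by (rule sets_eq_imp_space_eq)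

lemma mR_meas: "g \<in> space G \<Longrightarrow> m g \<in> measurable (restrict_space (piCK (s g)) {h. t h = s g}) G"
  using mg_meas[of g] s_space[of g]
  by (simp add: measurable_cong_sets[OF sets_restrict_space_cong[OF piCK_sets] refl])

lemma Om_sets: "g \<in> space G \<Longrightarrow> {h. t h = s g} \<inter> space (piCK (s g)) \<in> sets (piCK (s g))"
  using Fib_sets'[of g] s_space[of g] by (simp add: piCK_space piCK_sets)

lemma K_emeasure:
  assumes g: "g \<in> space G" and E: "E \<in> sets G"
  shows "emeasure (K g) E = emeasure (piCK (s g)) (pre g E)"
proof -
  let ?R = "restrict_space (piCK (s g)) {h. t h = s g}"
  have "emeasure (K g) E = emeasure ?R (m g -` E \<inter> space ?R)"
    unfolding K_eq[OF g] by (rule emeasure_distr[OF mR_meas[OF g] E])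
  also have "\<dots> = emeasure (piCK (s g)) (m g -` E \<inter> space ?R)"
    by (rule emeasure_restrict_space[OF Om_sets[OF g]]) (auto simp: space_restrict_space)
  also have "m g -` E \<inter> space ?R = pre g E"
    using g by (auto simp: space_restrict_space piCK_space s_space pre_def)
  finally show ?thesis .
qed

lemma K_int:
  assumes g: "g \<in> space G" and f: "f \<in> borel_measurable G"
  shows "(\<integral>\<^sup>+h. f h \<partial>K g) = (\<integral>\<^sup>+l. f (m g l) * indicator {l. t l = s g} l \<partial>piCK (s g))"
proof -
  have f': "f \<in> borel_measurable (distr (restrict_space (piCK (s g)) {h. t h = s g}) G (m g))"
    using f by simp
  show ?thesis unfolding K_eq[OF g]
    by (simp add: nn_integral_distr[OF mR_meas[OF g] f'] nn_integral_restrict_space[OF Om_sets[OF g]])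
qed

lemma scyl_markov:
  assumes g: "g \<in> space G" and A: "A \<in> sets G" and As: "set As \<subseteq> sets G"
  shows "emeasure (P g) {w\<in>space S. shd w \<in> A \<and> (\<forall>k<length As. stl w !! k \<in> As ! k)}
          = indicator A g * cyl_prob K As g"
  using markov[OF g] A As unfolding markov_measure_def by blast

lemma P_prob: "g \<in> space G \<Longrightarrow> prob_space (P g)"
  using markov unfolding markov_measure_def by blast

lemma P_sets: "g \<in> space G \<Longrightarrow> sets (P g) = sets S"
  using markov unfolding markov_measure_def by blast

lemma P_space: "g \<in> space G \<Longrightarrow> space (P g) = space S"
  using P_sets by (rule sets_eq_imp_space_eq)

lemma K_prob:
  assumes g: "g \<in> space G" shows "prob_space (K g)"
proof (rule prob_spaceI)
  have "{w\<in>space S. shd w \<in> space G \<and> (\<forall>k<length [space G]. stl w !! k \<in> [space G] ! k)} = space S"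
    by (auto simp: space_stream_space streams_shd streams_stl snth_in)
  then have "emeasure (P g) (space S) = indicator (space G) g * cyl_prob K [space G] g"
    using scyl_markov[OF g, of "space G" "[space G]"] by simp
  also have "\<dots> = emeasure (K g) (space G)"
  proof -
    have "space G \<in> sets (K g)" using K_sets[OF g] by simp
    then show ?thesis using g by (simp add: K_space nn_integral_indicator)
  qed
  finally show "emeasure (K g) (space (K g)) = 1"
    using prob_space.emeasure_space_1[OF P_prob[OF g]] g by (simp add: P_space K_space)
qed

lemma piCK_kernel: "piCK \<in> measurable X (subprob_algebra G)"
  by (rule measurable_subprob_algebra)
     (auto simp: piCK_sets piCK_meas intro: prob_space_imp_subprob_space piCK_prob)

lemma K_meas: "K \<in> measurable G (subprob_algebra G)"
proof (rule measurable_subprob_algebra)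
  fix g assume g: "g \<in> space G" then show "subprob_space (K g)"
    by (auto intro: prob_space_imp_subprob_space K_prob)
  show "sets (K g) = sets G" using K_sets[OF g] .
next
  fix E assume E: "E \<in> sets G"
  have L: "(\<lambda>g. piCK (s g)) \<in> measurable G (subprob_algebra G)"
    by (rule measurable_compose[OF s_meas piCK_kernel])
  have "(SIGMA g:space G. pre g E) = {p\<in>space (G \<Otimes>\<^sub>M G). s (fst p) = t (snd p) \<and> m (fst p) (snd p) \<in> E}"
    by (auto simp: pre_def space_pair_measure)
  then have "(SIGMA g:space G. pre g E) \<in> sets (G \<Otimes>\<^sub>M G)" using Dset[OF E] by simp
  from emeasure_measurable_subprob_algebra2[OF this L]
  have "(\<lambda>g. emeasure (piCK (s g)) (pre g E)) \<in> borel_measurable G" .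
  then show "(\<lambda>g. emeasure (K g) E) \<in> borel_measurable G"
    by (rule measurable_cong[THEN iffD1, rotated]) (simp add: K_emeasure E)
qed

lemma cyl_meas: "set As \<subseteq> sets G \<Longrightarrow> cyl_prob K As \<in> borel_measurable G"
proof (induction As)
  case Nil then show ?case by simp
next
  case (Cons A As)
  from Cons.prems have A[measurable]: "A \<in> sets G" and As: "set As \<subseteq> sets G" by auto
  have [measurable]: "cyl_prob K As \<in> borel_measurable G" using Cons.IH As .
  have f: "(\<lambda>h. indicator A h * cyl_prob K As h) \<in> borel_measurable G" by measurable
  have "(\<lambda>g. (\<lambda>M. \<integral>\<^sup>+h. indicator A h * cyl_prob K As h \<partial>M) (K g)) \<in> borel_measurable G"
    by (rule measurable_compose[OF K_meas nn_integral_measurable_subprob_algebra[OF f]])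
  then show ?case by (simp add: fun_eq_iff)
qed


lemma scyl_iff: "w \<in> streams \<Omega> \<Longrightarrow> (w \<in> scylinder \<Omega> As \<longleftrightarrow> (\<forall>k<length As. w !! k \<in> As ! k))"
proof (induction As arbitrary: w)
  case Nil then show ?case by simp
next
  case (Cons A As)
  have "stl w \<in> streams \<Omega>" using Cons.prems by (rule streams_stl)
  then show ?case using Cons.prems Cons.IH[of "stl w"]
    by (auto simp: less_Suc_eq_0_disj)
qed

lemma scyl_Cons_eq: "scylinder (space G) (A # As) =
   {w\<in>space S. shd w \<in> A \<and> (\<forall>k<length As. stl w !! k \<in> As ! k)}"
  by (auto simp: space_stream_space scyl_iff streams_stl)

lemma scyl_sets: "xs \<in> lists (sets G) \<Longrightarrow> scylinder (space G) xs \<in> sets S"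
  by (rule sets_scylinder) auto

lemma gen_Pow: "scylinder (space G) ` lists (sets G) \<subseteq> Pow (streams (space G))"
  using scylinder_streams by auto

lemma sets_S_gen: "sets S = sigma_sets (streams (space G)) (scylinder (space G) ` lists (sets G))"
proof (rule antisym)
  let ?N = "sigma (streams (space G)) (scylinder (space G) ` lists (sets G))"
  have spN: "space ?N = streams (space G)" using gen_Pow by (simp add: space_measure_of)
  have "sets S \<subseteq> sets ?N"
  proof (rule sets_stream_space_in_sets[OF spN])
    fix n :: nat
    show "(\<lambda>x. x !! n) \<in> measurable ?N G"
    proof (rule measurableI)
      fix x assume "x \<in> space ?N" then show "x !! n \<in> space G" by (simp add: spN snth_in)
    next
      fix A assume A: "A \<in> sets G"
      have "(\<lambda>x. x !! n) -` A \<inter> space ?N = scylinder (space G) (replicate n (space G) @ [A])"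
      proof (rule set_eqI, rule iffI)
        fix w assume "w \<in> (\<lambda>x. x !! n) -` A \<inter> space ?N"
        then show "w \<in> scylinder (space G) (replicate n (space G) @ [A])"
          by (auto simp: spN scyl_iff nth_append snth_in less_Suc_eq)
      next
        fix w assume w: "w \<in> scylinder (space G) (replicate n (space G) @ [A])"
        then have ws: "w \<in> streams (space G)" using scylinder_streams by blast
        with w have "w !! n \<in> A" by (auto simp: scyl_iff nth_append)
        then show "w \<in> (\<lambda>x. x !! n) -` A \<inter> space ?N" using ws by (simp add: spN)
      qed
      also have "\<dots> \<in> scylinder (space G) ` lists (sets G)" using A
        by (intro imageI) (auto simp: sets.top)
      then have "scylinder (space G) (replicate n (space G) @ [A]) \<in> sets ?N"
        by (subst sets_measure_of[OF gen_Pow]) (rule sigma_sets.Basic)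
      finally show "(\<lambda>x. x !! n) -` A \<inter> space ?N \<in> sets ?N" .
    qed
  qed
  then show "sets S \<subseteq> sigma_sets (streams (space G)) (scylinder (space G) ` lists (sets G))"
    using gen_Pow by simp
next
  show "sigma_sets (streams (space G)) (scylinder (space G) ` lists (sets G)) \<subseteq> sets S"
    using sigma_sets_le_sets_iff[of S "scylinder (space G) ` lists (sets G)"] scyl_sets
    by (auto simp: space_stream_space)
qed

lemma gen_Int_stable: "Int_stable (scylinder (space G) ` lists (sets G))"
proof (rule Int_stableI_image)
  fix xs ys assume "xs \<in> lists (sets G)" "ys \<in> lists (sets G)"
  then show "\<exists>zs\<in>lists (sets G). scylinder (space G) xs \<inter> scylinder (space G) ys = scylinder (space G) zs"
  proof (induction xs arbitrary: ys)
    case Nil then show ?case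
      by (auto simp add: Int_absorb1 scylinder_streams)
  next
    case xs: (Cons x xs)
    show ?case
    proof (cases ys)
      case Nil with xs.hyps show ?thesis
        by (auto simp add: Int_absorb2 scylinder_streams intro!: bexI[of _ "x#xs"])
    next
      case ys: (Cons y ys')
      with xs.IH[of ys'] xs.prems obtain zs where
        "zs \<in> lists (sets G)" and eq: "scylinder (space G) xs \<inter> scylinder (space G) ys' = scylinder (space G) zs"
        by auto
      show ?thesis
      proof (intro bexI[of _ "(x \<inter> y)#zs"])
        show "x \<inter> y # zs \<in> lists (sets G)"
          using \<open>zs\<in>lists (sets G)\<close> xs.prems xs.hyps ys by (auto intro: sets.Int)
        show "scylinder (space G) (x # xs) \<inter> scylinder (space G) ys = scylinder (space G) (x \<inter> y # zs)"
          by (auto simp add: eq[symmetric] ys)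
      qed
    qed
  qed
qed

lemma P_meas: "P \<in> measurable G (prob_algebra S)"
proof (rule measurable_prob_algebra_generated[OF sets_S_gen gen_Int_stable gen_Pow])
  fix g assume g: "g \<in> space G" then show "prob_space (P g)" by (rule P_prob)
  show "sets (P g) = sets S" using g by (rule P_sets)
next
  fix C assume "C \<in> scylinder (space G) ` lists (sets G)"
  then obtain xs where xs: "xs \<in> lists (sets G)" and C: "C = scylinder (space G) xs" by auto
  show "(\<lambda>g. emeasure (P g) C) \<in> borel_measurable G"
  proof (cases xs)
    case Nil
    then have "C = space S" using C by (simp add: space_stream_space)
    then show ?thesis
      by (intro measurable_cong[THEN iffD1, OF _ measurable_const[of 1]])
         (auto simp: P_space[symmetric] prob_space.emeasure_space_1[OF P_prob])
  next
    case (Cons A As)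
    with xs have A[measurable]: "A \<in> sets G" and As: "set As \<subseteq> sets G" by auto
    have [measurable]: "cyl_prob K As \<in> borel_measurable G" using cyl_meas[OF As] .
    have "(\<lambda>g. indicator A g * cyl_prob K As g) \<in> borel_measurable G" by measurable
    then show ?thesis
      by (rule measurable_cong[THEN iffD1, rotated])
         (simp del: scylinder.simps add: C Cons scyl_Cons_eq scyl_markov[OF _ A As])
  qed
qed

lemma P_unique:
  assumes M: "prob_space M" "sets M = sets S" and N: "prob_space N" "sets N = sets S"
    and eq: "\<And>A As. A \<in> sets G \<Longrightarrow> set As \<subseteq> sets G \<Longrightarrow>
       emeasure M {w\<in>space S. shd w \<in> A \<and> (\<forall>k<length As. stl w !! k \<in> As ! k)} =
       emeasure N {w\<in>space S. shd w \<in> A \<and> (\<forall>k<length As. stl w !! k \<in> As ! k)}"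
  shows "M = N"
proof (rule stream_space_eq_scylinder[where S = G and G = "sets G" and C = "{space G}"])
  show "Int_stable (sets G)" by (auto simp: Int_stable_def)
  show "sets G = sets (sigma (space G) (sets G))" by simp
  fix xs assume "xs \<noteq> []" "xs \<in> lists (sets G)"
  then obtain A As where "xs = A # As" "A \<in> sets G" "set As \<subseteq> sets G"
    by (cases xs) auto
  then show "emeasure M (scylinder (space G) xs) = emeasure N (scylinder (space G) xs)"
    using eq by (simp del: scylinder.simps add: scyl_Cons_eq)
qed (use M N in \<open>auto dest: sets.sets_into_space\<close>)


lemma K_fib:
  assumes g: "g \<in> space G" shows "AE h in K g. h \<in> space G \<and> t h = t g"
proof -
  let ?E = "{h\<in>space G. t h \<noteq> t g}"
  have E: "?E \<in> sets G"
  proof -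
    have "?E = space G - Fib (t g)" by (auto simp: Fib_def)
    then show ?thesis using Fib_sets[OF t_space[OF g]] by auto
  qed
  have "pre g ?E = {}" using g by (auto simp: pre_def st_m)
  then have "emeasure (K g) ?E = 0" by (simp add: K_emeasure[OF g E])
  moreover have "{h\<in>space (K g). \<not> (h \<in> space G \<and> t h = t g)} = ?E" using g by (auto simp: K_space)
  moreover have "?E \<in> sets (K g)" using E K_sets[OF g] by simp
  ultimately show ?thesis using AE_iff_measurable[of ?E "K g" "\<lambda>h. h \<in> space G \<and> t h = t g"] by simp
qed

lemma cyl_zero:
  assumes "g \<in> space G" "t g = y"
  shows "cyl_prob K (replicate j (space G) @ [{h\<in>space G. t h \<noteq> y}]) g = 0"
  using assms
proof (induction j arbitrary: g)
  case 0
  have "(\<integral>\<^sup>+h. indicator {h\<in>space G. t h \<noteq> y} h * cyl_prob K [] h \<partial>K g) = (\<integral>\<^sup>+h. 0 \<partial>K g)"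
    by (rule nn_integral_cong_AE) (use K_fib[OF 0(1)] 0(2) in \<open>auto elim!: AE_mp\<close>)
  then show ?case by simp
next
  case (Suc j)
  have "(\<integral>\<^sup>+h. indicator (space G) h * cyl_prob K (replicate j (space G) @ [{h\<in>space G. t h \<noteq> y}]) h \<partial>K g)
      = (\<integral>\<^sup>+h. 0 \<partial>K g)"
    by (rule nn_integral_cong_AE) (use K_fib[OF Suc(2)] Suc in \<open>auto elim!: AE_mp\<close>)
  then show ?case by simp
qed

lemma P_fib:
  assumes g: "g \<in> space G" shows "AE w in P g. \<forall>k. t (w !! k) = t g"
proof (subst AE_all_countable, rule allI)
  fix k
  let ?E = "{h\<in>space G. t h \<noteq> t g}"
  have E: "?E \<in> sets G"
  proof -
    have "?E = space G - Fib (t g)" by (auto simp: Fib_def)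
    then show ?thesis using Fib_sets[OF t_space[OF g]] by auto
  qed
  let ?N = "{w\<in>space S. w !! k \<in> ?E}"
  have N: "?N \<in> sets S" using E by measurable
  have "{w\<in>space (P g). \<not> t (w !! k) = t g} = ?N"
    using g by (auto simp: P_space space_stream_space snth_in)
  moreover have "emeasure (P g) ?N = 0"
  proof (cases k)
    case 0
    have "?N = {w\<in>space S. shd w \<in> ?E \<and> (\<forall>k<length ([]::'g set list). stl w !! k \<in> [] ! k)}"
      using 0 by auto
    then show ?thesis using scyl_markov[OF g E, of "[]"] by simp
  next
    case (Suc j)
    have "?N = {w\<in>space S. shd w \<in> space G \<and>
        (\<forall>k<length (replicate j (space G) @ [?E]). stl w !! k \<in> (replicate j (space G) @ [?E]) ! k)}"
      using Suc by (auto simp: space_stream_space snth_in streams_stl streams_shd nth_append less_Suc_eq)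
    moreover have "set (replicate j (space G) @ [?E]) \<subseteq> sets G" using E by auto
    ultimately show ?thesis using scyl_markov[OF g sets.top, of "replicate j (space G) @ [?E]"]
      cyl_zero[OF g refl, of j] by simp
  qed
  ultimately show "AE w in P g. t (w !! k) = t g"
    using N P_sets[OF g] by (simp add: AE_iff_measurable)
qed

lemma K_space_prob: "g \<in> space G \<Longrightarrow> K g \<in> space (prob_algebra G)"
  by (simp add: space_prob_algebra K_sets K_prob)

lemma markov1:
  assumes g: "g \<in> space G" and B: "B \<in> sets S"
  shows "emeasure (P g) (stl -` B \<inter> space S) = (\<integral>\<^sup>+h. emeasure (P h) B \<partial>K g)"
proof -
  have stl_m: "stl \<in> measurable (P g) S"
    using measurable_stl[of G] by (simp add: measurable_cong_sets[OF P_sets[OF g] refl])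
  have eq: "distr (P g) S stl = bind (K g) P"
  proof (rule P_unique)
    show "prob_space (distr (P g) S stl)"
      by (rule prob_space.prob_space_distr[OF P_prob[OF g] stl_m])
    show "sets (distr (P g) S stl) = sets S" by simp
    show "prob_space (bind (K g) P)" by (rule prob_space_bind'[OF K_space_prob[OF g] P_meas])
    show "sets (bind (K g) P) = sets S" by (rule sets_bind'[OF K_space_prob[OF g] P_meas])
    fix A As assume A: "A \<in> sets G" and As: "set As \<subseteq> sets G"
    let ?C = "{w\<in>space S. shd w \<in> A \<and> (\<forall>k<length As. stl w !! k \<in> As ! k)}"
    have "A # As \<in> lists (sets G)" using A As by auto
    from scyl_sets[OF this] have C: "?C \<in> sets S" unfolding scyl_Cons_eq .
    have "stl -` ?C \<inter> space (P g) =
      {w\<in>space S. shd w \<in> space G \<and> (\<forall>k<length (A # As). stl w !! k \<in> (A # As) ! k)}"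
    proof -
      have "\<And>w. w \<in> space S \<Longrightarrow> stl w \<in> space S" by (simp add: space_stream_space streams_stl)
      moreover have "\<And>w. w \<in> space S \<Longrightarrow> shd w \<in> space G" by (simp add: space_stream_space streams_shd)
      ultimately show ?thesis using g
        by (auto simp: P_space[OF g] All_less_Suc2)
    qed
    then have "emeasure (distr (P g) S stl) ?C = indicator (space G) g * cyl_prob K (A # As) g"
      using emeasure_distr[OF stl_m C] scyl_markov[OF g sets.top, of "A # As"] A As by simp
    also have "\<dots> = (\<integral>\<^sup>+h. indicator A h * cyl_prob K As h \<partial>K g)" using g by simp
    also have "\<dots> = (\<integral>\<^sup>+h. emeasure (P h) ?C \<partial>K g)"
      by (rule nn_integral_cong) (simp add: K_space[OF g] scyl_markov[OF _ A As])
    also have "\<dots> = emeasure (bind (K g) P) ?C"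
      by (rule emeasure_bind_prob_algebra[OF K_space_prob[OF g] P_meas C, symmetric])
    finally show "emeasure (distr (P g) S stl) ?C = emeasure (bind (K g) P) ?C" .
  qed
  have "emeasure (P g) (stl -` B \<inter> space S) = emeasure (distr (P g) S stl) B"
    using emeasure_distr[OF stl_m B] by (simp add: P_space[OF g])
  also have "\<dots> = emeasure (bind (K g) P) B" by (simp add: eq)
  also have "\<dots> = (\<integral>\<^sup>+h. emeasure (P h) B \<partial>K g)"
    by (rule emeasure_bind_prob_algebra[OF K_space_prob[OF g] P_meas B])
  finally show ?thesis .
qed


lemma pre_sets:
  assumes g: "g \<in> space G" and E: "E \<in> sets G" shows "pre g E \<in> sets G"
proof -
  have "Pair g -` {p\<in>space (G \<Otimes>\<^sub>M G). s (fst p) = t (snd p) \<and> m (fst p) (snd p) \<in> E} = pre g E"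
    using g by (auto simp: pre_def space_pair_measure)
  with sets_Pair1[OF Dset[OF E], of g] show ?thesis by simp
qed

lemma cyl_shift:
  assumes g: "g \<in> space G" and k: "k \<in> space G" "t k = s g" and As: "set As \<subseteq> sets G"
  shows "cyl_prob K As (m g k) = cyl_prob K (map (pre g) As) k"
  using k As
proof (induction As arbitrary: k)
  case Nil then show ?case by simp
next
  case (Cons A As)
  have A: "A \<in> sets G" and As: "set As \<subseteq> sets G" using Cons.prems by auto
  have As': "set (map (pre g) As) \<subseteq> sets G" using As pre_sets[OF g] by auto
  have gk: "m g k \<in> space G" using mult_space[OF g Cons.prems(1)] Cons.prems(2) by simp
  have sgk: "s (m g k) = s k" using st_m[OF g Cons.prems(1)] Cons.prems(2) by simp
  have [measurable]: "A \<in> sets G" "pre g A \<in> sets G" using A pre_sets[OF g A] by auto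
  have [measurable]: "cyl_prob K As \<in> borel_measurable G" "cyl_prob K (map (pre g) As) \<in> borel_measurable G"
    using cyl_meas[OF As] cyl_meas[OF As'] by auto
  have f1: "(\<lambda>h. indicator A h * cyl_prob K As h) \<in> borel_measurable G" by measurable
  have f2: "(\<lambda>h. indicator (pre g A) h * cyl_prob K (map (pre g) As) h) \<in> borel_measurable G" by measurable
  have "cyl_prob K (A # As) (m g k) =
     (\<integral>\<^sup>+l. (indicator A (m (m g k) l) * cyl_prob K As (m (m g k) l)) * indicator {l. t l = s k} l \<partial>piCK (s k))"
    using K_int[OF gk f1] by (simp add: sgk)
  also have "\<dots> = (\<integral>\<^sup>+l. (indicator (pre g A) (m k l) * cyl_prob K (map (pre g) As) (m k l)) *
       indicator {l. t l = s k} l \<partial>piCK (s k))"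
  proof (rule nn_integral_cong)
    fix l assume "l \<in> space (piCK (s k))"
    then have l: "l \<in> space G" using piCK_space[OF s_space[OF Cons.prems(1)]] by simp
    show "(indicator A (m (m g k) l) * cyl_prob K As (m (m g k) l)) * indicator {l. t l = s k} l =
      (indicator (pre g A) (m k l) * cyl_prob K (map (pre g) As) (m k l)) * indicator {l. t l = s k} l"
    proof (cases "t l = s k")
      case True
      have as: "m (m g k) l = m g (m k l)" using assoc[OF g Cons.prems(1) l Cons.prems(2)[symmetric] True[symmetric]] .
      have kl: "m k l \<in> space G" using mult_space[OF Cons.prems(1) l True[symmetric]] .
      have tkl: "t (m k l) = s g" using st_m[OF Cons.prems(1) l True[symmetric]] Cons.prems(2) by simp
      have "indicator (pre g A) (m k l) = (indicator A (m g (m k l)) :: ennreal)"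
        using kl tkl by (simp add: pre_def indicator_def)
      moreover have "cyl_prob K (map (pre g) As) (m k l) = cyl_prob K As (m g (m k l))"
        using Cons.IH[OF kl tkl As] by simp
      ultimately show ?thesis by (simp add: as)
    next
      case False then show ?thesis by simp
    qed
  qed
  also have "\<dots> = cyl_prob K (map (pre g) (A # As)) k"
    using K_int[OF Cons.prems(1) f2] by simp
  finally show ?case .
qed

lemma translation:
  assumes g: "g \<in> space G" and B: "B \<in> sets S"
  shows "emeasure (P g) B =
    emeasure (P (u (s g))) {w\<in>path_space G t. t (shd w) = s g \<and> smap (m g) w \<in> B}"
proof -
  define y where "y = s g"
  define e where "e = u y"
  have y: "y \<in> space X" using s_space[OF g] by (simp add: y_def)
  have e: "e \<in> space G" using u_space[OF y] by (simp add: e_def)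
  have te: "t e = y" using tu[OF y] by (simp add: e_def)
  have mge: "m g e = g" using unit_r[OF g] by (simp add: e_def y_def)
  define F where "F = {w\<in>space S. \<forall>k. t (w !! k) = y}"
  have [measurable]: "Fib y \<in> sets G" using Fib_sets[OF y] .
  have "{w\<in>space S. \<forall>k. w !! k \<in> Fib y} \<in> sets S" by measurable
  moreover have "{w\<in>space S. \<forall>k. w !! k \<in> Fib y} = F"
    by (auto simp: F_def Fib_def space_stream_space snth_in)
  ultimately have F: "F \<in> sets S" by simp
  have Fe: "F \<in> sets (P e)" using F P_sets[OF e] by simp
  have Fsp: "F \<inter> space (P e) \<in> sets (P e)"
    using Fe by (simp add: F_def P_space[OF e] Collect_conj_eq Int_commute Int_absorb1)
  have AEF: "AE w in P e. w \<in> F"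
    using P_fib[OF e] by (auto simp: F_def te P_space[OF e] elim!: AE_mp intro!: AE_I2)
  have PF: "emeasure (P e) F = 1"
    by (rule prob_space.emeasure_eq_1_AE[OF P_prob[OF e] Fe AEF])
  let ?R = "restrict_space (P e) F"
  have spR: "space ?R = F" using F by (auto simp: space_restrict_space P_space[OF e] F_def)
  have R: "prob_space ?R" by (rule prob_space_restrict_space[OF Fe PF])
  have sm: "smap (m g) \<in> measurable ?R S"
  proof (rule measurable_stream_space2)
    fix n
    have "(\<lambda>w. w !! n) \<in> measurable (P e) G"
      using measurable_snth[of n G] by (simp add: measurable_cong_sets[OF P_sets[OF e] refl])
    then have "(\<lambda>w. w !! n) \<in> measurable ?R (restrict_space G {h. t h = s g})"
      by (rule measurable_restrict_space3) (auto simp: F_def y_def)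
    from measurable_compose[OF this mg_meas[OF g]]
    show "(\<lambda>w. smap (m g) w !! n) \<in> measurable ?R G" by simp
  qed
  let ?Q = "distr ?R S (smap (m g))"
  have eq: "P g = ?Q"
  proof (rule P_unique)
    show "prob_space (P g)" using P_prob[OF g] .
    show "sets (P g) = sets S" using P_sets[OF g] .
    show "prob_space ?Q" by (rule prob_space.prob_space_distr[OF R sm])
    show "sets ?Q = sets S" by simp
    fix A As assume A: "A \<in> sets G" and As: "set As \<subseteq> sets G"
    let ?C = "{w\<in>space S. shd w \<in> A \<and> (\<forall>k<length As. stl w !! k \<in> As ! k)}"
    let ?C' = "{w\<in>space S. shd w \<in> pre g A \<and> (\<forall>k<length (map (pre g) As). stl w !! k \<in> map (pre g) As ! k)}"
    have "A # As \<in> lists (sets G)" using A As by auto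
    from scyl_sets[OF this] have C: "?C \<in> sets S" unfolding scyl_Cons_eq .
    have As': "set (map (pre g) As) \<subseteq> sets G" using As pre_sets[OF g] by auto
    have "pre g A # map (pre g) As \<in> lists (sets G)" using As' pre_sets[OF g A] by auto
    from scyl_sets[OF this] have C': "?C' \<in> sets S" unfolding scyl_Cons_eq .
    have "emeasure ?Q ?C = emeasure ?R (smap (m g) -` ?C \<inter> space ?R)"
      by (rule emeasure_distr[OF sm C])
    also have "\<dots> = emeasure (P e) (smap (m g) -` ?C \<inter> F)"
      unfolding spR by (rule emeasure_restrict_space[OF Fsp]) auto
    also have "smap (m g) -` ?C \<inter> F = ?C' \<inter> F"
    proof -
      have Hs: "\<And>w. w \<in> F \<Longrightarrow> smap (m g) w \<in> space S"
        using g by (auto simp: F_def space_stream_space streams_iff_snth y_def intro!: mult_space)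
      have "\<And>w k. w \<in> F \<Longrightarrow> w !! k \<in> space G \<and> t (w !! k) = s g"
        by (auto simp: F_def space_stream_space streams_iff_snth y_def)
      note H1 = this
      have H2: "\<And>w. w \<in> F \<Longrightarrow> shd w \<in> space G \<and> t (shd w) = s g"
        using H1 by (metis snth.simps(1))
      have H3: "\<And>w k. w \<in> F \<Longrightarrow> stl w !! k \<in> space G \<and> t (stl w !! k) = s g"
        using H1 by (metis snth.simps(2))
      show ?thesis
      proof (intro set_eqI iffI)
        fix w assume w: "w \<in> smap (m g) -` ?C \<inter> F"
        then have wF: "w \<in> F" and wC: "smap (m g) w \<in> ?C" by auto
        have ws: "w \<in> space S" using wF by (simp add: F_def)
        have "m g (shd w) \<in> A" using wC by simp
        then have a: "shd w \<in> pre g A" using H2[OF wF] by (simp add: pre_def)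
        have "\<forall>k<length As. stl w !! k \<in> map (pre g) As ! k"
        proof (intro allI impI)
          fix k assume k: "k < length As"
          then have "m g (stl w !! k) \<in> As ! k" using wC by simp
          then show "stl w !! k \<in> map (pre g) As ! k" using H3[OF wF, of k] k by (simp add: pre_def)
        qed
        then show "w \<in> ?C' \<inter> F" using a ws wF by simp
      next
        fix w assume w: "w \<in> ?C' \<inter> F"
        then have wF: "w \<in> F" and wC: "w \<in> ?C'" by auto
        have "m g (shd w) \<in> A" using wC by (simp add: pre_def)
        moreover have "\<forall>k<length As. stl (smap (m g) w) !! k \<in> As ! k"
        proof (intro allI impI)
          fix k assume k: "k < length As"
          then have "stl w !! k \<in> pre g (As ! k)" using wC by simp
          then show "stl (smap (m g) w) !! k \<in> As ! k" by (simp add: pre_def)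
        qed
        ultimately show "w \<in> smap (m g) -` ?C \<inter> F" using Hs[OF wF] wF by simp
      qed
    qed
    also have "emeasure (P e) (?C' \<inter> F) = emeasure (P e) ?C'"
      by (rule emeasure_eq_AE) (use AEF C' F P_sets[OF e] in auto)
    also have "\<dots> = indicator (pre g A) e * cyl_prob K (map (pre g) As) e"
      using scyl_markov[OF e pre_sets[OF g A] As'] by simp
    also have "\<dots> = indicator A g * cyl_prob K As g"
    proof -
      have "indicator (pre g A) e = (indicator A g :: ennreal)"
        using e te mge by (simp add: pre_def indicator_def y_def)
      moreover have "cyl_prob K As (m g e) = cyl_prob K (map (pre g) As) e"
        by (rule cyl_shift[OF g e _ As]) (simp add: te y_def)
      ultimately show ?thesis by (simp add: mge)
    qed
    also have "\<dots> = emeasure (P g) ?C" using scyl_markov[OF g A As] by simp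
    finally show "emeasure (P g) ?C = emeasure ?Q ?C" by simp
  qed
  have "emeasure (P g) B = emeasure ?R (smap (m g) -` B \<inter> space ?R)"
    unfolding eq by (rule emeasure_distr[OF sm B])
  also have "\<dots> = emeasure (P e) (smap (m g) -` B \<inter> F)"
    unfolding spR by (rule emeasure_restrict_space[OF Fsp]) auto
  also have "smap (m g) -` B \<inter> F = {w\<in>path_space G t. t (shd w) = s g \<and> smap (m g) w \<in> B}"
    by (auto simp: F_def path_space_def y_def) (metis snth.simps(1))+
  finally show ?thesis by (simp add: e_def y_def)
qed

lemma conc_AE:
  assumes x: "x \<in> space X" and Q: "sets Q = sets G" and z: "emeasure Q {w\<in>space G. t w \<noteq> x} = 0"
  shows "AE g in Q. g \<in> space G \<and> t g = x"
proof -
  have sp: "space Q = space G" using Q by (rule sets_eq_imp_space_eq)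
  have "{w\<in>space G. t w \<noteq> x} = space G - Fib x" by (auto simp: Fib_def)
  then have E: "{w\<in>space G. t w \<noteq> x} \<in> sets Q" using Fib_sets[OF x] Q by auto
  have "{g\<in>space Q. \<not> (g \<in> space G \<and> t g = x)} = {w\<in>space G. t w \<noteq> x}" using sp by auto
  then show ?thesis using AE_iff_measurable[OF E, of "\<lambda>g. g \<in> space G \<and> t g = x"] z by simp
qed

end

lemma disint_nn_integral:
  assumes D: "disintegration M N X f Kd" and NX: "sets N = sets X" and N: "prob_space N"
    and h: "h \<in> borel_measurable M"
  shows "(\<integral>\<^sup>+w. h w \<partial>M) = (\<integral>\<^sup>+x. (\<integral>\<^sup>+w. h w \<partial>Kd x) \<partial>N)"
proof -
  have spN: "space N = space X" using NX by (rule sets_eq_imp_space_eq)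
  have ne: "space N \<noteq> {}" using prob_space.not_empty[OF N] .
  have Kd: "Kd \<in> measurable N (subprob_algebra M)"
  proof (rule measurable_subprob_algebra)
    fix x assume "x \<in> space N" then show "subprob_space (Kd x)" "sets (Kd x) = sets M"
      using D spN unfolding disintegration_def by (auto intro: prob_space_imp_subprob_space)
  next
    fix E assume "E \<in> sets M"
    then show "(\<lambda>x. emeasure (Kd x) E) \<in> borel_measurable N"
      using D unfolding disintegration_def by (simp add: measurable_cong_sets[OF NX refl])
  qed
  have eq: "M = bind N Kd"
  proof (rule measure_eqI)
    show "sets M = sets (bind N Kd)"
      using sets_bind[OF _ ne, of Kd M] Kd by (simp add: subprob_measurableD(2))
    fix E assume E: "E \<in> sets M"
    show "emeasure M E = emeasure (bind N Kd) E"
      using D E emeasure_bind[OF ne Kd E] unfolding disintegration_def by simp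
  qed
  show ?thesis by (subst eq) (rule nn_integral_bind[OF h Kd])
qed


theorem proposition4p4:
  fixes G :: "'g measure" and X :: "'x measure"
    and s t :: "'g \<Rightarrow> 'x" and u :: "'x \<Rightarrow> 'g"
    and m :: "'g \<Rightarrow> 'g \<Rightarrow> 'g" and i :: "'g \<Rightarrow> 'g"
    and lam :: "'x \<Rightarrow> 'g measure" and mu :: "'x measure"
    and pi :: "'g measure" and piK piCK :: "'x \<Rightarrow> 'g measure"
    and P :: "'g \<Rightarrow> 'g stream measure"
  assumes "measured_groupoid G X s t u m i lam mu"
    and "prob_space pi" and "sets pi = sets G"
    and "equiv_measures pi (integrate_family G mu lam)"
    and "distr pi X t = mu" and "distr pi X s = mu"
    and "disintegration pi mu X t piK"
    and "disintegration (distr pi G i) mu X t piCK"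
    and "\<forall>g\<in>space G. markov_measure G (reflected_transition G s t m piCK) g (P g)"
  shows "\<forall>A. stable_invariant G t A \<longrightarrow>
           (\<integral>\<^sup>+ x. emeasure (P (u x)) A \<partial>mu) =
           (\<integral>\<^sup>+ x. (\<integral>\<^sup>+ g. emeasure (P (u x))
               {w\<in>path_space G t. t (shd w) = t g \<and> smap (m (i g)) w \<in> A} \<partial>(piK x)) \<partial>mu)"
proof (intro allI impI)
  note MG = assms(1)[unfolded measured_groupoid_def]
  have bg: "borel_groupoid G X s t u m i" and sb: "standard_borel X" and mu: "prob_space mu"
    and muX: "sets mu = sets X" using MG by auto
  have spmu: "space mu = space X" using muX by (rule sets_eq_imp_space_eq)
  have pisp: "space pi = space G" using assms(3) by (rule sets_eq_imp_space_eq)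
  note DK = assms(7)[unfolded disintegration_def]
  note DC = assms(8)[unfolded disintegration_def]
  have mkI: "mk G X s t u m i piCK P"
    unfolding mk_def using bg sb DC assms(9) by auto
  interpret mk G X s t u m i piCK P by (rule mkI)
  fix A assume SI: "stable_invariant G t A"
  then have A: "A \<in> sets S" and Apath: "A \<subseteq> path_space G t"
    and Ainv: "\<And>w w'. w \<in> path_space G t \<Longrightarrow> w' \<in> path_space G t \<Longrightarrow> stably_equiv w w' \<Longrightarrow> (w \<in> A \<longleftrightarrow> w' \<in> A)"
    unfolding stable_invariant_def by blast+
  define \<Phi> where "\<Phi> h = emeasure (P h) A" for h
  have \<Phi>m: "\<Phi> \<in> borel_measurable G"
    unfolding \<Phi>_def
    by (rule measurable_compose[OF measurable_prob_algebraD[OF P_meas] measurable_emeasure_subprob_algebra[OF A]])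
  have step1: "emeasure (P (u x)) A = (\<integral>\<^sup>+h. \<Phi> h \<partial>K (u x))" if x: "x \<in> space X" for x
  proof -
    have ux: "u x \<in> space G" using u_space[OF x] .
    have AE1: "AE w in P (u x). w \<in> A \<longleftrightarrow> w \<in> stl -` A \<inter> space S"
      using P_fib[OF ux] AE_space
    proof (eventually_elim)
      case (elim w)
      then have ws: "w \<in> space S" by (simp add: P_space[OF ux])
      have wp: "w \<in> path_space G t" using elim ws by (auto simp: path_space_def)
      have ws': "stl w \<in> space S" using ws by (simp add: space_stream_space streams_stl)
      have wp': "stl w \<in> path_space G t" using elim ws' by (auto simp: path_space_def) (metis snth.simps(2))
      have "stably_equiv w (stl w)" unfolding stably_equiv_def
        by (rule exI[of _ 1], rule exI[of _ 0]) simp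
      then show ?case using Ainv[OF wp wp'] ws by auto
    qed
    have "emeasure (P (u x)) A = emeasure (P (u x)) (stl -` A \<inter> space S)"
    proof (rule emeasure_eq_AE[OF AE1])
      show "A \<in> sets (P (u x))" using A P_sets[OF ux] by simp
      have "stl -` A \<inter> space S \<in> sets S" using A by measurable
      then show "stl -` A \<inter> space S \<in> sets (P (u x))" using P_sets[OF ux] by simp
    qed
    also have "\<dots> = (\<integral>\<^sup>+h. \<Phi> h \<partial>K (u x))" unfolding \<Phi>_def by (rule markov1[OF ux A])
    finally show ?thesis .
  qed
  have step3: "AE x in mu. emeasure (P (u x)) A = (\<integral>\<^sup>+h. \<Phi> h \<partial>piCK x)"
    using DC[THEN conjunct2, THEN conjunct1] AE_space
  proof (eventually_elim)
    case (elim x)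
    then have x: "x \<in> space X" by (simp add: spmu)
    have ux: "u x \<in> space G" using u_space[OF x] .
    have AEc: "AE l in piCK x. l \<in> space G \<and> t l = x"
      using conc_AE[OF x piCK_sets[OF x]] elim by simp
    have "emeasure (P (u x)) A = (\<integral>\<^sup>+l. \<Phi> (m (u x) l) * indicator {l. t l = s (u x)} l \<partial>piCK (s (u x)))"
      using step1[OF x] K_int[OF ux \<Phi>m] by simp
    also have "\<dots> = (\<integral>\<^sup>+l. \<Phi> (m (u x) l) * indicator {l. t l = x} l \<partial>piCK x)"
      using su[OF x] by simp
    also have "\<dots> = (\<integral>\<^sup>+l. \<Phi> l \<partial>piCK x)"
    proof (rule nn_integral_cong_AE)
      show "AE l in piCK x. \<Phi> (m (u x) l) * indicator {l. t l = x} l = \<Phi> l"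
        using AEc by eventually_elim (use unit_l in \<open>auto\<close>)
    qed
    finally show ?case .
  qed
  have "(\<integral>\<^sup>+ x. emeasure (P (u x)) A \<partial>mu) = (\<integral>\<^sup>+x. (\<integral>\<^sup>+h. \<Phi> h \<partial>piCK x) \<partial>mu)"
    by (rule nn_integral_cong_AE[OF step3])
  also have "\<dots> = (\<integral>\<^sup>+h. \<Phi> h \<partial>distr pi G i)"
    by (rule disint_nn_integral[OF assms(8) muX mu, symmetric]) (simp add: \<Phi>m)
  also have "\<dots> = (\<integral>\<^sup>+g. \<Phi> (i g) \<partial>pi)"
  proof -
    have im: "i \<in> measurable pi G" using i_meas by (simp add: measurable_cong_sets[OF assms(3) refl])
    have "\<Phi> \<in> borel_measurable (distr pi G i)" using \<Phi>m by simp
    then show ?thesis by (rule nn_integral_distr[OF im])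
  qed
  also have "\<dots> = (\<integral>\<^sup>+x. (\<integral>\<^sup>+g. \<Phi> (i g) \<partial>piK x) \<partial>mu)"
  proof (rule disint_nn_integral[OF assms(7) muX mu])
    show "(\<lambda>g. \<Phi> (i g)) \<in> borel_measurable pi"
      using measurable_compose[OF i_meas \<Phi>m] by (simp add: measurable_cong_sets[OF assms(3) refl])
  qed
  also have "\<dots> = (\<integral>\<^sup>+ x. (\<integral>\<^sup>+ g. emeasure (P (u x))
               {w\<in>path_space G t. t (shd w) = t g \<and> smap (m (i g)) w \<in> A} \<partial>(piK x)) \<partial>mu)"
  proof (rule nn_integral_cong_AE)
    show "AE x in mu. (\<integral>\<^sup>+g. \<Phi> (i g) \<partial>piK x) = (\<integral>\<^sup>+ g. emeasure (P (u x))
               {w\<in>path_space G t. t (shd w) = t g \<and> smap (m (i g)) w \<in> A} \<partial>(piK x))"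
      using DK[THEN conjunct2, THEN conjunct1] AE_space
    proof (eventually_elim)
      case (elim x)
      then have x: "x \<in> space X" by (simp add: spmu)
      have sK: "sets (piK x) = sets G" using DK x assms(3) by auto
      have AEc: "AE g in piK x. g \<in> space G \<and> t g = x"
        using conc_AE[OF x sK] elim by (simp add: pisp)
      show ?case
      proof (rule nn_integral_cong_AE)
        show "AE g in piK x. \<Phi> (i g) = emeasure (P (u x))
               {w\<in>path_space G t. t (shd w) = t g \<and> smap (m (i g)) w \<in> A}"
          using AEc
        proof (eventually_elim)
          case (elim g)
          then have g: "g \<in> space G" and tg: "t g = x" by auto
          have ig: "i g \<in> space G" using i_space[OF g] .
          have sig: "s (i g) = t g" using inv[OF g] by simp
          show ?case unfolding \<Phi>_def using translation[OF ig A] sig tg by simp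
        qed
      qed
    qed
  qed
  finally show "(\<integral>\<^sup>+ x. emeasure (P (u x)) A \<partial>mu) = (\<integral>\<^sup>+ x. (\<integral>\<^sup>+ g. emeasure (P (u x))
               {w\<in>path_space G t. t (shd w) = t g \<and> smap (m (i g)) w \<in> A} \<partial>(piK x)) \<partial>mu)" .
qed

end
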